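(* Let $p\in\mathbb{N}_0$ and for $j\ge2$ let $\overline{\eta}_j=(-1)^j(2^j-2)\psi^{(j-1)}(1)$. If either $z=2\pi$ and $n\in\{0,1\}$, or $z=\pi$ and $n=0$, then $$\mathrm{Ls}_{p+n+1}^{(n)}(z)=-\int_0^z x^n\log^p\Big(2\sin\frac{x}{2}\Big)dx=\frac{(-1)^{p+1}z^{n+1}}{2^p(n+1)}\,B_p(0,\overline{\eta}_2,\overline{\eta}_3,\dots,\overline{\eta}_p).$$
   Context: $\mathrm{Ls}_{N}^{(n)}(\theta)=-\int_0^\theta x^n\big(\log|2\sin(x/2)|\big)^{N-n-1}dx$. $\psi^{(n)}(z)=\frac{d^{n+1}}{dz^{n+1}}\log\Gamma(z)$ is the polygamma function. $B_n(s_1,\dots,s_n)$ denotes the complete Bell polynomial, defined by $\exp\big(\sum_{j\ge1}s_j t^j/j!\big)=\sum_{n\ge0}B_n(s_1,\dots,s_n)t^n/n!$; $B_0=1$. *)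

theory Defs
  imports "HOL-Analysis.Analysis" "HOL-Computational_Algebra.Formal_Power_Series"
begin

definition Ls :: "nat \<Rightarrow> nat \<Rightarrow> real \<Rightarrow> real" where
  "Ls N n \<theta> = - (LBINT x=0..\<theta>. x ^ n * (ln \<bar>2 * sin (x / 2)\<bar>) ^ (N - n - 1))"

text \<open>Complete Bell polynomial B_n(s_1,...,s_n), defined through its exponential
  generating function exp(sum_{j>=1} s_j t^j / j!) = sum_n B_n t^n / n!.
  Only s 1, ..., s n are relevant; s 0 is ignored.\<close>
definition bell_gf_arg :: "(nat \<Rightarrow> real) \<Rightarrow> real fps" where
  "bell_gf_arg s = Abs_fps (\<lambda>j. if j = 0 then 0 else s j / fact j)"

definition complete_bell :: "nat \<Rightarrow> (nat \<Rightarrow> real) \<Rightarrow> real" where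
  "complete_bell n s = fact n * fps_nth (fps_exp 1 oo bell_gf_arg s) n"

definition eta_bar :: "nat \<Rightarrow> real" where
  "eta_bar j = (-1) ^ j * (2 ^ j - 2) * Polygamma (j - 1) (1::real)"

end

theory Submission
  imports Defs "HOL-Complex_Analysis.Complex_Analysis"
begin

lemma sqrt_01: "0 < u \<Longrightarrow> u < 1 \<Longrightarrow> 0 < sqrt u \<and> sqrt u < (1::real)"
  by auto

lemma neg1_le_sqrt: "0 \<le> x \<Longrightarrow> -1 \<le> sqrt (x::real)"
  using real_sqrt_ge_zero[of x] by linarith

lemma arcsin_sqrt_01:
  assumes "0 < u" "u < (1::real)"
  shows "0 < arcsin (sqrt u)" "arcsin (sqrt u) < pi/2"
proof -
  have s: "0 < sqrt u" "sqrt u < 1" using sqrt_01 assms by auto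
  show "0 < arcsin (sqrt u)" using arcsin_less_arcsin[of 0 "sqrt u"] s by simp
  show "arcsin (sqrt u) < pi/2" using arcsin_less_arcsin[of "sqrt u" 1] s by simp
qed

lemma Spow_key:
  fixes t u :: real assumes u: "0 < u" "u < 1"
  shows "(2 * sin (2 * arcsin (sqrt u) / 2)) powr t * (1/(sqrt u * sqrt (1-u)))
       = 2 powr t * (u powr ((t+1)/2 - 1) * (1-u) powr (1/2 - 1))"
proof -
  have su: "sqrt u > 0" "sqrt (1-u) > 0" using u by auto
  have "sin (arcsin (sqrt u)) = sqrt u" by (intro sin_arcsin neg1_le_sqrt) (use u in auto)
  hence "sin (2 * arcsin (sqrt u) / 2) = sqrt u" by simp
  moreover have "(2 * sqrt u) powr t = 2 powr t * (sqrt u) powr t" using u by (simp add: powr_mult)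
  moreover have "(sqrt u) powr t = (u powr (1/2)) powr t" using powr_half_sqrt[of u] u by simp
  moreover have "(u powr (1/2)) powr t = u powr (t/2)" by (simp add: powr_powr)
  ultimately have "(2 * sin (2 * arcsin (sqrt u) / 2)) powr t = 2 powr t * u powr (t/2)"
    by simp
  moreover have "1/(sqrt u * sqrt (1-u)) = u powr (-(1/2)) * (1-u) powr (-(1/2))"
    using u by (simp add: powr_half_sqrt powr_minus_divide)
  ultimately have "(2 * sin (2 * arcsin (sqrt u) / 2)) powr t * (1/(sqrt u * sqrt (1-u)))
      = 2 powr t * ((u powr (t/2) * u powr (-(1/2))) * (1-u) powr (-(1/2)))" by (simp add: mult_ac)
  also have "u powr (t/2) * u powr (-(1/2)) = u powr ((t+1)/2 - 1)"
    using u by (simp add: powr_add[symmetric] field_simps)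
  finally show ?thesis by simp
qed

lemma Spow:
  fixes t :: real assumes t: "t > -1"
  shows "set_integrable lborel {0<..<pi} (\<lambda>x. (2 * sin (x/2)) powr t)"
    "(LBINT x:{0<..<pi}. (2 * sin (x/2)) powr t) = 2 powr t * Beta ((t+1)/2) (1/2)"
proof -
  define f where "f = (\<lambda>x::real. (2 * sin (x/2)) powr t)"
  define g where "g = (\<lambda>u::real. 2 * arcsin (sqrt u))"
  define g' where "g' = (\<lambda>u::real. 1/(sqrt u * sqrt (1-u)))"
  define Bf where "Bf = (\<lambda>u::real. u powr ((t+1)/2 - 1) * (1-u) powr (1/2 - 1))"
  have d: "(g has_real_derivative g' u) (at u)" if "0<u" "u<1" for u::real
  proof -
    have "((\<lambda>u. 2 * arcsin (sqrt u)) has_real_derivative 2*(inverse (sqrt (1 - (sqrt u)^2)) * (inverse (sqrt u)/2))) (at u)"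
    proof -
      have "-1 < sqrt u" "sqrt u < 1" using sqrt_01[OF that] by linarith+
      thus ?thesis using that by (auto intro!: derivative_eq_intros)
    qed
    moreover have "2*(inverse (sqrt (1 - (sqrt u)^2)) * (inverse (sqrt u)/2)) = 1/(sqrt u * sqrt (1-u))"
      using that by (simp add: field_simps real_sqrt_mult)
    ultimately show ?thesis by (simp add: g_def g'_def)
  qed
  have c: "isCont f (g u)" if "0<u" "u<1" for u::real
  proof -
    have "0 < arcsin (sqrt u)" "arcsin (sqrt u) < pi/2"
      using arcsin_sqrt_01 that by auto
    hence "sin (2 * arcsin (sqrt u)/2) > 0" by (intro sin_gt_zero) auto
    thus ?thesis unfolding f_def g_def by (auto intro!: continuous_intros)
  qed
  have c2: "isCont g' u" if "0<u" "u<1" for u::real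
    using that unfolding g'_def by (auto intro!: continuous_intros)
  have gcont: "continuous_on {0..1} g"
    unfolding g_def by (intro continuous_intros) (auto intro: neg1_le_sqrt)
  have lim0: "((ereal \<circ> g \<circ> real_of_ereal) \<longlongrightarrow> ereal 0) (at_right (ereal 0))"
  proof -
    have "(g \<longlongrightarrow> g 0) (at 0 within {0..1})"
      using gcont unfolding continuous_on_def by (meson atLeastAtMost_iff order_refl zero_le_one)
    thus ?thesis unfolding ereal_tendsto_simps at_within_Icc_at_right[of 0 1, symmetric, OF zero_less_one] by (simp add: g_def)
  qed
  have lim1: "((ereal \<circ> g \<circ> real_of_ereal) \<longlongrightarrow> ereal pi) (at_left (ereal 1))"
  proof -
    have "(g \<longlongrightarrow> g 1) (at 1 within {0..1})"
      using gcont unfolding continuous_on_def by (meson atLeastAtMost_iff order_refl zero_le_one)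
    thus ?thesis unfolding ereal_tendsto_simps at_within_Icc_at_left[of 0 1, symmetric, OF zero_less_one] by (simp add: g_def)
  qed
  have key: "f (g u) * g' u = 2 powr t * Bf u" if "u \<in> {0<..<1}" for u
    using Spow_key[of u t] that by (simp add: f_def g_def g'_def Bf_def)
  have iB: "set_integrable lborel {0..1} Bf"
    unfolding Bf_def using t by (intro integrable_Beta) auto
  have iB': "set_integrable lborel {0<..<1} (\<lambda>u. 2 powr t * Bf u)"
  proof -
    have "{0<..<1::real} \<subseteq> {0..1}" by auto
    hence "set_integrable lborel {0<..<1} Bf" using set_integrable_subset[OF iB, of "{0<..<1}"] by auto
    thus ?thesis by (auto intro: set_integrable_mult_right)
  qed
  have ifg: "set_integrable lborel (einterval (ereal 0) (ereal 1)) (\<lambda>u. f (g u) * g' u)"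
    unfolding einterval_eq_Icc using iB' by (subst set_integrable_cong[OF refl refl key]) auto
  have g'nn: "0 \<le> g' u" if "ereal 0 \<le> ereal u" "ereal u \<le> ereal 1" for u using that unfolding g'_def by simp
  have fnn: "0 \<le> f (g u)" for u unfolding f_def by simp
  have S: "set_integrable lborel (einterval (ereal 0) (ereal pi)) f"
    "(LBINT x=ereal 0..ereal pi. f x) = (LBINT x=ereal 0..ereal 1. f (g x) * g' x)"
    by (rule interval_integral_substitution_nonneg[of "ereal 0" "ereal 1" g g' f "ereal 0" "ereal pi"];
        (simp only: ereal_less(3) ereal_less_eq(3))?; (rule d c c2 fnn g'nn lim0 lim1 ifg)?; simp)+
  show "set_integrable lborel {0<..<pi} (\<lambda>x. (2 * sin (x/2)) powr t)"
    using S(1) by (simp add: einterval_eq_Icc f_def)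
  have "(LBINT x:{0<..<pi}. (2 * sin (x/2)) powr t) = (LBINT x=ereal 0..ereal pi. f x)"
    by (simp add: interval_integral_Ioo f_def)
  also have "\<dots> = (LBINT u=ereal 0..ereal 1. f (g u) * g' u)" using S(2) by simp
  also have "\<dots> = (LBINT u:{0<..<1}. 2 powr t * Bf u)"
  proof -
    have "(LBINT u:{0<..<1}. f (g u) * g' u) = (LBINT u:{0<..<1}. 2 powr t * Bf u)"
      by (rule set_lebesgue_integral_cong) (auto simp: key)
    thus ?thesis by (simp add: interval_lebesgue_integral_def einterval_eq_Icc del: set_integral_mult_right)
  qed
  also have "\<dots> = 2 powr t * (LBINT u:{0..1}. Bf u)"
    using interval_integral_Icc[of 0 1 Bf] interval_integral_Ioo[of "ereal 0" "ereal 1" Bf] by simp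
  also have "(LBINT u:{0..1}. Bf u) = Beta ((t+1)/2) (1/2)"
    using set_borel_integral_eq_integral(2)[OF iB] has_integral_Beta_real[of "(t+1)/2" "1/2"] t
    by (simp add: Bf_def integral_unique)
  finally show "(LBINT x:{0<..<pi}. (2 * sin (x/2)) powr t) = 2 powr t * Beta ((t+1)/2) (1/2)" .
qed

lemma Gamma_ident:
  fixes t :: real assumes t: "t > -1"
  shows "2 powr t * Beta ((t+1)/2) (1/2) = pi * Gamma (1+t) / Gamma (1+t/2)^2"
proof -
  define a where "a = (t+1)/2"
  have a: "a > 0" using t by (simp add: a_def)
  have "complex_of_real (Gamma a) * complex_of_real (Gamma (a + 1/2)) =
        exp ((1 - 2 * complex_of_real a) * of_real (ln 2)) * of_real (sqrt pi) * complex_of_real (Gamma (2*a))"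
  proof -
    have nz: "complex_of_real a \<notin> \<int>\<^sub>\<le>\<^sub>0" "complex_of_real a + 1/2 \<notin> \<int>\<^sub>\<le>\<^sub>0"
      using a by (auto elim!: nonpos_Ints_cases simp: complex_eq_iff)
    from Gamma_legendre_duplication[OF nz] show ?thesis
      by (simp add: Gamma_complex_of_real[symmetric])
  qed
  also have "exp ((1 - 2 * complex_of_real a) * of_real (ln 2)) = of_real (exp ((1 - 2*a) * ln 2))"
    by (simp flip: exp_of_real)
  finally have dup: "Gamma a * Gamma (a + 1/2) = exp ((1 - 2*a) * ln 2) * sqrt pi * Gamma (2*a)"
    by (simp flip: of_real_mult)
  have e: "exp ((1 - 2*a) * ln 2) = 2 powr (-t)" by (simp add: a_def powr_def algebra_simps)
  have e1: "a + 1/2 = 1 + t/2" by (simp add: a_def field_simps)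
  have e2: "2*a = 1+t" by (simp add: a_def field_simps)
  have g1: "Gamma (a + 1/2) = Gamma (1 + t/2)" "Gamma (2*a) = Gamma (1+t)" by (simp_all only: e1 e2)
  have pos: "Gamma (1 + t/2) > 0" using t by (intro Gamma_real_pos) simp
  have ga: "Gamma a = 2 powr (-t) * sqrt pi * Gamma (1+t) / Gamma (1+t/2)"
    using dup pos unfolding e g1 by (simp add: field_simps)
  have "2 powr t * Beta a (1/2) = 2 powr t * (Gamma a * sqrt pi / Gamma (1 + t/2))"
    by (simp add: Beta_def Gamma_one_half_real g1[symmetric] add_ac)
  also have "\<dots> = (2 powr t * 2 powr (-t)) * (sqrt pi * sqrt pi) * Gamma (1+t) / Gamma (1+t/2)^2"
    unfolding ga by (simp add: power2_eq_square)
  also have "\<dots> = pi * Gamma (1+t) / Gamma (1+t/2)^2"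
    by (simp add: powr_add[symmetric])
  finally show ?thesis by (simp add: a_def)
qed

lemma exp_abs_le: "exp (r * \<bar>y\<bar>) \<le> exp (r*y) + exp (-(r*y))" for r y :: real
  by (cases "y \<ge> 0") (auto simp: abs_if add_increasing add_increasing2)

lemma exp_int:
  fixes r :: real assumes r: "0 \<le> r" "r < 1"
  shows "set_integrable lborel {0<..<pi} (\<lambda>x. exp (r * \<bar>ln (2 * sin (x/2))\<bar>))"
proof (rule set_integrable_bound)
  show "set_integrable lborel {0<..<pi} (\<lambda>x. (2 * sin (x/2)) powr r + (2 * sin (x/2)) powr (-r))"
    using r by (intro set_integral_add Spow) auto
  show "set_borel_measurable lborel {0<..<pi} (\<lambda>x. exp (r * \<bar>ln (2 * sin (x/2))\<bar>))"
    unfolding set_borel_measurable_def by measurable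
  show "AE x in lborel. x \<in> {0<..<pi} \<longrightarrow> norm (exp (r * \<bar>ln (2 * sin (x/2))\<bar>))
      \<le> norm ((2 * sin (x/2)) powr r + (2 * sin (x/2)) powr (-r))"
  proof (intro AE_I2 impI)
    fix x :: real assume x: "x \<in> {0<..<pi}"
    hence s: "2 * sin (x/2) > 0" by (auto intro!: sin_gt_zero)
    thus "norm (exp (r * \<bar>ln (2 * sin (x/2))\<bar>)) \<le> norm ((2 * sin (x/2)) powr r + (2 * sin (x/2)) powr (-r))"
      using exp_abs_le[of r "ln (2 * sin (x/2))"] by (simp add: powr_def mult_ac)
  qed
qed

definition Lf :: "real \<Rightarrow> real" where "Lf x = ln (2 * sin (x/2))"
definition acoef :: "nat \<Rightarrow> real" where "acoef p = (LBINT x:{0<..<pi}. Lf x ^ p)"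

lemma Lf_meas[measurable]: "Lf \<in> borel_measurable borel"
  unfolding Lf_def by measurable

lemma S_pos: "x \<in> {0<..<pi} \<Longrightarrow> 2 * sin (x/2) > 0"
  by (auto intro!: sin_gt_zero)

lemma term_le_exp: "(y::real) \<ge> 0 \<Longrightarrow> y^p / fact p \<le> exp y"
proof -
  assume y: "y \<ge> 0"
  have s: "summable (\<lambda>n. y^n /\<^sub>R fact n)" using exp_converges[of y] by (rule sums_summable)
  have "sum (\<lambda>n. y^n /\<^sub>R fact n) {p} \<le> (\<Sum>n. y^n /\<^sub>R fact n)"
    by (rule sum_le_suminf[OF s]) (use y in auto)
  thus ?thesis using exp_converges[of y] by (simp add: sums_iff divide_inverse mult_ac)
qed

lemma partial_le_exp: "(y::real) \<ge> 0 \<Longrightarrow> (\<Sum>i<n. y^i / fact i) \<le> exp y"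
proof -
  assume y: "y \<ge> 0"
  have s: "summable (\<lambda>n. y^n /\<^sub>R fact n)" using exp_converges[of y] by (rule sums_summable)
  have "sum (\<lambda>n. y^n /\<^sub>R fact n) {..<n} \<le> (\<Sum>n. y^n /\<^sub>R fact n)"
    by (rule sum_le_suminf[OF s]) (use y in auto)
  thus ?thesis using exp_converges[of y] by (simp add: sums_iff divide_inverse mult_ac)
qed

lemma pow_le_exp: "(r::real) > 0 \<Longrightarrow> \<bar>y\<bar>^p \<le> fact p / r^p * exp (r*\<bar>y\<bar>)"
proof -
  assume r: "r > 0"
  have "(r*\<bar>y\<bar>)^p / fact p \<le> exp (r*\<bar>y\<bar>)" using r by (intro term_le_exp) auto
  hence "r^p * \<bar>y\<bar>^p \<le> fact p * exp (r*\<bar>y\<bar>)" by (simp add: power_mult_distrib field_simps)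
  thus ?thesis using r by (simp add: field_simps)
qed

lemma Lpow_int: "set_integrable lborel {0<..<pi} (\<lambda>x. Lf x ^ p)"
proof (rule set_integrable_bound)
  show "set_integrable lborel {0<..<pi} (\<lambda>x. fact p / (1/2)^p * exp ((1/2) * \<bar>ln (2 * sin (x/2))\<bar>))"
    using exp_int[of "1/2"] by (intro set_integrable_mult_right) auto
  show "set_borel_measurable lborel {0<..<pi} (\<lambda>x. Lf x ^ p)"
    unfolding set_borel_measurable_def by measurable
  show "AE x in lborel. x \<in> {0<..<pi} \<longrightarrow> norm (Lf x ^ p)
      \<le> norm (fact p / (1/2)^p * exp ((1/2) * \<bar>ln (2 * sin (x/2))\<bar>))"
    using pow_le_exp[of "1/2" "Lf _" p] by (intro AE_I2) (auto simp: Lf_def power_abs)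
qed

lemma series:
  fixes t :: real assumes t: "\<bar>t\<bar> < 1"
  shows "(\<lambda>p. acoef p / fact p * t^p) sums (LBINT x:{0<..<pi}. (2 * sin (x/2)) powr t)"
    "summable (\<lambda>p. \<bar>acoef p\<bar> / fact p * \<bar>t\<bar>^p)"
proof -
  define I where "I = {0<..<pi::real}"
  define f where "f = (\<lambda>i x. indicator I x *\<^sub>R (t^i / fact i * Lf x ^ i))"
  have fint: "integrable lborel (f i)" for i
  proof -
    have "set_integrable lborel I (\<lambda>x. t^i / fact i * Lf x ^ i)"
      using Lpow_int[of i] unfolding I_def by (intro set_integrable_mult_right)
    thus ?thesis unfolding f_def set_integrable_def .
  qed
  have nf: "norm (f i x) = indicator I x * (\<bar>t * Lf x\<bar>^i / fact i)" for i x
    by (simp add: f_def abs_mult power_abs power_mult_distrib indicator_def)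
  have summ: "AE x in lborel. summable (\<lambda>i. norm (f i x))"
  proof (intro AE_I2)
    fix x
    have "summable (\<lambda>n. \<bar>t * Lf x\<bar>^n /\<^sub>R fact n)" using exp_converges by (rule sums_summable)
    hence "summable (\<lambda>n. indicator I x * (\<bar>t * Lf x\<bar>^n / fact n))"
      by (intro summable_mult) (simp add: divide_inverse mult_ac)
    thus "summable (\<lambda>i. norm (f i x))" unfolding nf .
  qed
  have eint: "integrable lborel (\<lambda>x. indicator I x * exp (\<bar>t\<bar> * \<bar>Lf x\<bar>))"
    using exp_int[of "\<bar>t\<bar>"] t unfolding set_integrable_def I_def Lf_def by (simp add: mult_ac)
  have sint: "summable (\<lambda>i. (\<integral>x. norm (f i x) \<partial>lborel))"
  proof (rule summableI_nonneg_bounded)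
    show "0 \<le> (\<integral>x. norm (f i x) \<partial>lborel)" for i by simp
    show "(\<Sum>i<n. (\<integral>x. norm (f i x) \<partial>lborel)) \<le> (\<integral>x. indicator I x * exp (\<bar>t\<bar> * \<bar>Lf x\<bar>) \<partial>lborel)" for n
    proof -
      have "(\<Sum>i<n. (\<integral>x. norm (f i x) \<partial>lborel)) = (\<integral>x. (\<Sum>i<n. norm (f i x)) \<partial>lborel)"
        using fint by (intro Bochner_Integration.integral_sum[where I="{..<n}" and f="\<lambda>i x. norm (f i x)", symmetric] integrable_norm)
      also have "\<dots> \<le> (\<integral>x. indicator I x * exp (\<bar>t\<bar> * \<bar>Lf x\<bar>) \<partial>lborel)"
      proof (rule integral_mono)
        show "integrable lborel (\<lambda>x. \<Sum>i<n. norm (f i x))" using fint by auto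
        show "integrable lborel (\<lambda>x. indicator I x * exp (\<bar>t\<bar> * \<bar>Lf x\<bar>))" by (rule eint)
        fix x
        have "(\<Sum>i<n. norm (f i x)) = indicator I x * (\<Sum>i<n. \<bar>t * Lf x\<bar>^i / fact i)"
          by (simp only: nf sum_distrib_left)
        also have "\<dots> \<le> indicator I x * exp (\<bar>t * Lf x\<bar>)"
          by (intro mult_left_mono partial_le_exp) auto
        finally show "(\<Sum>i<n. norm (f i x)) \<le> indicator I x * exp (\<bar>t\<bar> * \<bar>Lf x\<bar>)"
          by (simp add: abs_mult)
      qed
      finally show ?thesis .
    qed
  qed
  note R = sums_integral[OF fint summ sint]
  have intf: "integral\<^sup>L lborel (f i) = acoef i / fact i * t^i" for i
  proof -
    have "integral\<^sup>L lborel (f i) = (LBINT x:I. t^i / fact i * Lf x ^ i)"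
      unfolding f_def set_lebesgue_integral_def by (rule refl)
    also have "\<dots> = t^i / fact i * acoef i" unfolding acoef_def I_def by (rule set_integral_mult_right)
    finally show ?thesis by simp
  qed
  have sumf: "(\<Sum>i. f i x) = indicator I x *\<^sub>R (2 * sin (x/2)) powr t" for x
  proof (cases "x \<in> I")
    case True
    have "(\<lambda>i. (t * Lf x)^i /\<^sub>R fact i) sums exp (t * Lf x)" by (rule exp_converges)
    moreover have "exp (t * Lf x) = (2 * sin (x/2)) powr t"
      using S_pos[of x] True by (simp add: I_def Lf_def powr_def)
    moreover have "(t * Lf x)^i /\<^sub>R fact i = f i x" for i
      using True by (simp add: f_def power_mult_distrib field_simps)
    ultimately have "(\<lambda>i. f i x) sums ((2 * sin (x/2)) powr t)"
      by simp
    thus ?thesis using True by (simp add: sums_iff)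
  next
    case False thus ?thesis by (simp add: f_def)
  qed
  from R(1) show "(\<lambda>p. acoef p / fact p * t^p) sums (LBINT x:{0<..<pi}. (2 * sin (x/2)) powr t)"
    by (simp add: intf sumf set_lebesgue_integral_def I_def)
  have "\<bar>acoef p\<bar> / fact p * \<bar>t\<bar>^p \<le> (\<integral>x. norm (f p x) \<partial>lborel)" for p
  proof -
    have "\<bar>acoef p\<bar> / fact p * \<bar>t\<bar>^p = norm (integral\<^sup>L lborel (f p))"
      by (simp add: intf abs_mult power_abs)
    also have "\<dots> \<le> (\<integral>x. norm (f p x) \<partial>lborel)" by (rule integral_norm_bound)
    finally show ?thesis .
  qed
  thus "summable (\<lambda>p. \<bar>acoef p\<bar> / fact p * \<bar>t\<bar>^p)"
    by (intro summable_comparison_test[OF _ sint] exI[of _ 0]) auto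
qed

definition fps_cr :: "real fps \<Rightarrow> complex fps" where
  "fps_cr F = Abs_fps (\<lambda>n. complex_of_real (fps_nth F n))"

lemma fps_cr_nth[simp]: "fps_nth (fps_cr F) n = complex_of_real (fps_nth F n)"
  by (simp add: fps_cr_def)

lemma fps_cr_mult: "fps_cr (F * G) = fps_cr F * fps_cr G"
  by (simp add: fps_eq_iff fps_mult_nth)

lemma fps_cr_power: "fps_cr (F ^ i) = fps_cr F ^ i"
proof (induction i)
  case 0 thus ?case by (simp add: fps_eq_iff fps_cr_def)
next
  case (Suc i) thus ?case by (simp add: fps_cr_mult)
qed

lemma fps_cr_compose: "fps_cr (F oo G) = fps_cr F oo fps_cr G"
  by (simp add: fps_eq_iff fps_compose_nth fps_cr_power[symmetric])

lemma fps_cr_exp: "fps_cr (fps_exp 1) = fps_exp 1"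
  by (simp add: fps_eq_iff)

definition cpr :: "nat \<Rightarrow> real" where
  "cpr j = Polygamma (j - 1) 1 * (1 - 2 / 2^j)"

definition sbar :: "nat \<Rightarrow> real" where
  "sbar j = (if j \<le> 1 then 0 else eta_bar j)"

lemma cpr_scale: "j \<ge> 1 \<Longrightarrow> cpr j = (-1/2)^j * sbar j"
proof -
  assume j: "j \<ge> 1"
  show ?thesis
  proof (cases "j = 1")
    case True thus ?thesis by (simp add: cpr_def sbar_def)
  next
    case False
    hence "(-1/2::real)^j * (-1)^j = (1/2)^j" by (simp add: power_mult_distrib[symmetric])
    hence "(-1/2::real)^j * sbar j = (1/2)^j * (2^j - 2) * Polygamma (j - 1) 1"
      using False j by (simp add: sbar_def eta_bar_def mult.assoc[symmetric])
    also have "\<dots> = cpr j" by (simp add: cpr_def field_simps power_one_over)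
    finally show ?thesis by simp
  qed
qed

lemma bell_scale: "bell_gf_arg cpr = bell_gf_arg sbar oo (fps_const (-1/2) * fps_X)"
  by (simp add: fps_compose_linear fps_eq_iff bell_gf_arg_def cpr_scale)

lemma complete_bell_scale: "complete_bell p cpr = (-1/2)^p * complete_bell p sbar"
proof -
  have "fps_exp 1 oo bell_gf_arg cpr = (fps_exp 1 oo bell_gf_arg sbar) oo (fps_const (-1/2) * fps_X)"
    unfolding bell_scale by (rule fps_compose_assoc) (simp_all add: bell_gf_arg_def)
  thus ?thesis by (simp add: complete_bell_def fps_compose_linear)
qed

lemma ln_Gamma_1_complex: "ln_Gamma (1::complex) = 0"
  using ln_Gamma_complex_of_real[of 1] ln_Gamma_real_pos[of 1] by simp

lemma nonpos_aux: "norm (w::complex) < 1 \<Longrightarrow> 1 + w \<notin> \<real>\<^sub>\<le>\<^sub>0"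
proof
  assume w: "norm w < 1" and "1 + w \<in> \<real>\<^sub>\<le>\<^sub>0"
  hence "Re (1 + w) \<le> 0" by (auto simp: complex_nonpos_Reals_iff)
  moreover have "\<bar>Re w\<bar> < 1" using abs_Re_le_cmod[of w] w by linarith
  ultimately show False by simp
qed

definition LG :: "complex fps" where "LG = fps_expansion ln_Gamma 1"

lemma LG_exp: "(\<lambda>w. ln_Gamma (1 + w)) has_fps_expansion LG"
  unfolding LG_def
proof (rule analytic_at_imp_has_fps_expansion, rule analytic_ln_Gamma)
  show "{1::complex} \<inter> \<real>\<^sub>\<le>\<^sub>0 = {}" using nonpos_aux[of 0] by auto
qed

lemma LG_nth: "fps_nth LG n = (if n = 0 then 0 else complex_of_real (Polygamma (n-1) 1) / fact n)"
proof -
  have "(1::complex) \<notin> \<real>\<^sub>\<le>\<^sub>0" using nonpos_aux[of 0] by simp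
  from higher_deriv_ln_Gamma_complex[OF this, of n] show ?thesis
    unfolding LG_def fps_expansion_def
    using Polygamma_of_real[where 'a=complex, of 1 "n-1"] by (simp add: ln_Gamma_1_complex)
qed

lemma half_exp: "(\<lambda>w. ln_Gamma (1 + w/2)) has_fps_expansion (LG oo (fps_const (1/2) * fps_X))"
proof -
  have "(\<lambda>w::complex. (1/2) * w) has_fps_expansion fps_const (1/2) * fps_X"
    by (rule has_fps_expansion_cmult_left[OF has_fps_expansion_fps_X])
  from has_fps_expansion_compose[OF LG_exp this] show ?thesis
    by (simp add: o_def)
qed

definition H :: "complex fps" where "H = LG - fps_const 2 * (LG oo (fps_const (1/2) * fps_X))"

lemma H_exp: "(\<lambda>w. ln_Gamma (1+w) - 2 * ln_Gamma (1 + w/2)) has_fps_expansion H"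
  unfolding H_def by (intro has_fps_expansion_diff LG_exp has_fps_expansion_cmult_left half_exp)

lemma H_eq: "H = fps_cr (bell_gf_arg cpr)"
proof (rule fps_ext)
  fix n
  show "fps_nth H n = fps_nth (fps_cr (bell_gf_arg cpr)) n"
  proof (cases "n = 0")
    case True thus ?thesis by (simp add: H_def LG_nth bell_gf_arg_def)
  next
    case False
    have c: "fps_nth (LG oo (fps_const (1/2) * fps_X)) n = (1/2)^n * fps_nth LG n"
      by (subst fps_compose_linear) simp
    have "fps_nth H n = fps_nth LG n - 2 * fps_nth (LG oo (fps_const (1/2) * fps_X)) n"
      unfolding H_def by simp
    also have "\<dots> = fps_nth LG n * (1 - 2 * (1/2)^n)" unfolding c by (simp add: algebra_simps)
    also have "\<dots> = complex_of_real (Polygamma (n-1) 1 * (1 - 2 / 2^n) / fact n)"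
      using False by (simp add: LG_nth power_one_over)
    also have "\<dots> = fps_nth (fps_cr (bell_gf_arg cpr)) n"
      using False by (simp add: bell_gf_arg_def cpr_def)
    finally show ?thesis .
  qed
qed

definition Efun :: "complex \<Rightarrow> complex" where
  "Efun w = exp (ln_Gamma (1+w) - 2 * ln_Gamma (1 + w/2))"

lemma E_exp: "Efun has_fps_expansion (fps_exp 1 oo H)"
proof -
  have "fps_nth H 0 = 0" by (simp add: H_eq bell_gf_arg_def)
  from has_fps_expansion_compose[OF has_fps_expansion_exp1 H_exp this] show ?thesis
    by (simp add: o_def Efun_def[abs_def])
qed

lemma E_holo: "Efun holomorphic_on ball 0 1"
proof (subst holomorphic_on_open, simp, intro ballI)
  fix w :: complex assume w: "w \<in> ball 0 1"
  have n1: "1 + w \<notin> \<real>\<^sub>\<le>\<^sub>0" using w by (intro nonpos_aux) auto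
  have n2: "1 + w/2 \<notin> \<real>\<^sub>\<le>\<^sub>0" using w by (intro nonpos_aux) (auto simp: norm_divide)
  have d1: "((\<lambda>w. ln_Gamma (1+w)) has_field_derivative Digamma (1+w) * 1) (at w)"
    by (rule DERIV_chain2[where g="\<lambda>w. 1 + w" and x=w, OF has_field_derivative_ln_Gamma_complex[OF n1]])
       (rule derivative_eq_intros refl | simp)+
  have d2: "((\<lambda>w. ln_Gamma (1+w/2)) has_field_derivative Digamma (1+w/2) * (1/2)) (at w)"
  proof (rule DERIV_chain2[where g="\<lambda>w. 1 + w/2" and x=w, OF has_field_derivative_ln_Gamma_complex[OF n2]])
    show "((\<lambda>w::complex. 1 + w/2) has_field_derivative 1/2) (at w)"
      by (rule derivative_eq_intros refl | simp)+
  qed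
  have d3: "((\<lambda>w. ln_Gamma (1+w) - 2 * ln_Gamma (1+w/2)) has_field_derivative
      Digamma (1+w) * 1 - 2 * (Digamma (1+w/2) * (1/2))) (at w)"
    by (rule DERIV_diff[OF d1 DERIV_cmult[OF d2]])
  show "\<exists>f'. (Efun has_field_derivative f') (at w)"
    unfolding Efun_def[abs_def] using DERIV_chain2[where f=exp, OF DERIV_exp d3] by blast
qed

lemma E_real:
  fixes t :: real assumes t: "\<bar>t\<bar> < 1"
  shows "Efun (complex_of_real t) = complex_of_real (Gamma (1+t) / Gamma (1+t/2)^2)"
proof -
  have p1: "1 + t > 0" "1 + t/2 > 0" using t by auto
  have "ln_Gamma (1 + complex_of_real t) = of_real (ln_Gamma (1+t))"
    using ln_Gamma_complex_of_real[OF p1(1)] by simp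
  moreover have "ln_Gamma (1 + complex_of_real t / 2) = of_real (ln_Gamma (1+t/2))"
    using ln_Gamma_complex_of_real[OF p1(2)] by simp
  ultimately have "Efun (complex_of_real t) = of_real (exp (ln_Gamma (1+t) - 2 * ln_Gamma (1+t/2)))"
    by (simp add: Efun_def flip: exp_of_real)
  also have "exp (ln_Gamma (1+t) - 2 * ln_Gamma (1+t/2)) = Gamma (1+t) / Gamma (1+t/2)^2"
  proof -
    have e2: "exp (2 * y) = exp y ^ 2" for y :: real by (metis exp_add mult_2 power2_eq_square)
    have "exp (ln_Gamma (1+t) - 2 * ln_Gamma (1+t/2)) = exp (ln (Gamma (1+t))) / exp (ln (Gamma (1+t/2))) ^ 2"
      by (simp only: ln_Gamma_real_pos[OF p1(1)] ln_Gamma_real_pos[OF p1(2)] exp_diff e2)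
    also have "\<dots> = Gamma (1+t) / Gamma (1+t/2)^2"
      using Gamma_real_pos[OF p1(1)] Gamma_real_pos[OF p1(2)] by (simp only: exp_ln)
    finally show ?thesis .
  qed
  finally show ?thesis .
qed

definition Acf :: "complex fps" where "Acf = Abs_fps (\<lambda>p. complex_of_real (acoef p / fact p))"

lemma Acf_radius: "fps_conv_radius Acf \<ge> ereal (1/2)"
proof -
  have "summable (\<lambda>n. norm (fps_nth Acf n * complex_of_real (1/2) ^ n))"
  proof -
    have "summable (\<lambda>p. \<bar>acoef p\<bar> / fact p * \<bar>1/2::real\<bar>^p)" by (rule series(2)) simp
    moreover have "norm (fps_nth Acf n * complex_of_real (1/2) ^ n) = \<bar>acoef n\<bar> / fact n * \<bar>1/2::real\<bar>^n" for n
      by (simp add: Acf_def norm_mult norm_power norm_divide)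
    ultimately show ?thesis by simp
  qed
  hence "summable (\<lambda>n. fps_nth Acf n * complex_of_real (1/2) ^ n)" by (rule summable_norm_cancel)
  hence "conv_radius (fps_nth Acf) \<ge> norm (complex_of_real (1/2))" by (rule conv_radius_geI)
  thus ?thesis by (simp add: fps_conv_radius_def)
qed

lemma Acf_real:
  fixes t :: real assumes t: "\<bar>t\<bar> < 1"
  shows "eval_fps Acf (complex_of_real t) = complex_of_real pi * Efun (complex_of_real t)"
proof -
  have "(\<lambda>p. acoef p / fact p * t^p) sums (LBINT x:{0<..<pi}. (2 * sin (x/2)) powr t)"
    by (rule series(1)[OF t])
  also have "(LBINT x:{0<..<pi}. (2 * sin (x/2)) powr t) = pi * (Gamma (1+t) / Gamma (1+t/2)^2)"
    using Spow(2)[of t] Gamma_ident[of t] t by simp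
  finally have "(\<lambda>p. complex_of_real (acoef p / fact p * t^p)) sums complex_of_real (pi * (Gamma (1+t) / Gamma (1+t/2)^2))"
    by (subst sums_of_real_iff)
  hence "(\<lambda>p. fps_nth Acf p * complex_of_real t ^ p) sums (complex_of_real pi * Efun (complex_of_real t))"
    using E_real[OF t] by (simp add: Acf_def)
  thus ?thesis by (simp add: eval_fps_def sums_iff)
qed

lemma Acf_eq: "Acf = fps_const (complex_of_real pi) * (fps_exp 1 oo H)"
proof -
  define phi where "phi = (\<lambda>w. eval_fps Acf w - complex_of_real pi * Efun w)"
  have sub: "ball 0 (1/2) \<subseteq> eball (0::complex) (fps_conv_radius Acf)"
  proof
    fix w :: complex assume "w \<in> ball 0 (1/2)"
    hence "ereal (norm w) < ereal (1/2)" by simp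
    also have "\<dots> \<le> fps_conv_radius Acf" using Acf_radius by simp
    finally show "w \<in> eball 0 (fps_conv_radius Acf)" by simp
  qed
  have hol: "phi holomorphic_on ball 0 (1/2)"
    unfolding phi_def
    by (intro holomorphic_intros sub holomorphic_on_subset[OF E_holo]) auto
  define U where "U = complex_of_real ` {-1/4<..<1/4}"
  have U: "U \<subseteq> ball 0 (1/2)" by (auto simp: U_def)
  have lim: "0 islimpt U"
  proof (rule islimpt_approachable[THEN iffD2], intro allI impI)
    fix e :: real assume e: "e > 0"
    define x where "x = min (e/2) (1/8)"
    have "complex_of_real x \<in> U" using e by (auto simp: U_def x_def)
    moreover have "complex_of_real x \<noteq> 0" "dist (complex_of_real x) 0 < e" using e by (auto simp: x_def)
    ultimately show "\<exists>x'\<in>U. x' \<noteq> 0 \<and> dist x' 0 < e" by blast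
  qed
  have zU: "phi z = 0" if "z \<in> U" for z
  proof -
    from that obtain t where t: "t \<in> {-1/4<..<1/4}" "z = complex_of_real t" by (auto simp: U_def)
    hence "\<bar>t\<bar> < 1" by auto
    thus ?thesis using Acf_real t by (simp add: phi_def)
  qed
  have z: "phi w = 0" if "w \<in> ball 0 (1/2)" for w
    by (rule analytic_continuation[OF hol _ _ U _ lim zU that]) auto
  have "eventually (\<lambda>w. w \<in> ball (0::complex) (1/2)) (nhds 0)"
    by (intro eventually_nhds_in_open) auto
  hence ev: "eventually (\<lambda>w. eval_fps Acf w = complex_of_real pi * Efun w) (nhds 0)"
    by eventually_elim (use z in \<open>auto simp: phi_def\<close>)
  have r: "fps_conv_radius Acf > 0" using Acf_radius by (rule less_le_trans[rotated]) simp
  have e1: "(\<lambda>w. complex_of_real pi * Efun w) has_fps_expansion Acf"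
    unfolding has_fps_expansion_def using r ev by simp
  have e2: "(\<lambda>w. complex_of_real pi * Efun w) has_fps_expansion fps_const (complex_of_real pi) * (fps_exp 1 oo H)"
    by (rule has_fps_expansion_cmult_left[OF E_exp])
  show ?thesis by (rule fps_expansion_unique_complex[OF e1 e2])
qed

lemma acoef_eq: "acoef p = pi * complete_bell p cpr"
proof -
  have "fps_exp 1 oo H = fps_cr (fps_exp 1 oo bell_gf_arg cpr)"
    by (simp add: H_eq fps_cr_compose fps_cr_exp)
  hence "complex_of_real (acoef p / fact p) = complex_of_real (pi * fps_nth (fps_exp 1 oo bell_gf_arg cpr) p)"
    using arg_cong[OF Acf_eq, of "\<lambda>F. fps_nth F p"] by (simp add: Acf_def)
  hence "acoef p / fact p = pi * fps_nth (fps_exp 1 oo bell_gf_arg cpr) p" by (simp only: of_real_eq_iff)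
  thus ?thesis by (simp add: complete_bell_def field_simps)
qed

lemma reflect:
  fixes h :: "real \<Rightarrow> real"
  shows "set_integrable lborel {pi<..<2*pi} h \<longleftrightarrow> set_integrable lborel {0<..<pi} (\<lambda>y. h (2*pi - y))"
    "(LBINT x:{pi<..<2*pi}. h x) = (LBINT y:{0<..<pi}. h (2*pi - y))"
proof -
  define F where "F = (\<lambda>x. indicator {pi<..<2*pi} x *\<^sub>R h x)"
  have FF: "(\<lambda>y. F (2*pi + (-1) * y)) = (\<lambda>y. indicator {0<..<pi} y *\<^sub>R h (2*pi - y))"
    by (rule ext) (auto simp: F_def indicator_def)
  have a: "integrable lborel (\<lambda>y. F (2*pi + (-1)*y)) \<longleftrightarrow> integrable lborel F"
    by (rule lborel_integrable_real_affine_iff) simp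
  have b: "integral\<^sup>L lborel F = \<bar>-1::real\<bar> *\<^sub>R integral\<^sup>L lborel (\<lambda>y. F (2*pi + (-1)*y))"
    by (rule lborel_integral_real_affine) simp
  note a' = a[unfolded FF, unfolded F_def]
  note b' = b[unfolded FF, unfolded F_def]
  show "set_integrable lborel {pi<..<2*pi} h \<longleftrightarrow> set_integrable lborel {0<..<pi} (\<lambda>y. h (2*pi - y))"
    unfolding set_integrable_def using a' by blast
  show "(LBINT x:{pi<..<2*pi}. h x) = (LBINT y:{0<..<pi}. h (2*pi - y))"
    unfolding set_lebesgue_integral_def using b' by simp
qed

lemma split2:
  fixes f :: "real \<Rightarrow> real"
  assumes m: "f \<in> borel_measurable borel"
    and i1: "set_integrable lborel {0<..<pi} f" and i2: "set_integrable lborel {pi<..<2*pi} f"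
  shows "set_integrable lborel {0<..<2*pi} f"
    "(LBINT x:{0<..<2*pi}. f x) = (LBINT x:{0<..<pi}. f x) + (LBINT x:{pi<..<2*pi}. f x)"
proof -
  note [measurable] = m
  have ae: "AE x in lborel. indicator {0<..<pi} x *\<^sub>R f x + indicator {pi<..<2*pi} x *\<^sub>R f x
              = indicator {0<..<2*pi} x *\<^sub>R f x"
    using AE_lborel_singleton[of pi] by eventually_elim (auto simp: indicator_def)
  have isum: "integrable lborel (\<lambda>x. indicator {0<..<pi} x *\<^sub>R f x + indicator {pi<..<2*pi} x *\<^sub>R f x)"
    using i1 i2 unfolding set_integrable_def by (rule Bochner_Integration.integrable_add)
  show "set_integrable lborel {0<..<2*pi} f"
    unfolding set_integrable_def by (rule integrable_cong_AE_imp[OF isum _ ae]) measurable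
  have "(LBINT x:{0<..<2*pi}. f x) = (\<integral>x. indicator {0<..<pi} x *\<^sub>R f x + indicator {pi<..<2*pi} x *\<^sub>R f x \<partial>lborel)"
    unfolding set_lebesgue_integral_def
    by (rule integral_cong_AE[symmetric]; (measurable)?) (rule ae)
  also have "\<dots> = (LBINT x:{0<..<pi}. f x) + (LBINT x:{pi<..<2*pi}. f x)"
    unfolding set_lebesgue_integral_def
    using i1 i2 unfolding set_integrable_def by (rule Bochner_Integration.integral_add)
  finally show "(LBINT x:{0<..<2*pi}. f x) = (LBINT x:{0<..<pi}. f x) + (LBINT x:{pi<..<2*pi}. f x)" .
qed

lemma Lf_reflect: "Lf (2*pi - y) = Lf y"
proof -
  have "sin ((2*pi - y)/2) = sin (pi - y/2)" by (simp add: field_simps)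
  thus ?thesis by (simp add: Lf_def)
qed

lemma xLpow_int: "set_integrable lborel {0<..<pi} (\<lambda>x. x * Lf x ^ p)"
proof (rule set_integrable_bound)
  show "set_integrable lborel {0<..<pi} (\<lambda>x. pi * Lf x ^ p)"
    using Lpow_int[of p] by (intro set_integrable_mult_right)
  show "set_borel_measurable lborel {0<..<pi} (\<lambda>x. x * Lf x ^ p)"
    unfolding set_borel_measurable_def by measurable
  show "AE x in lborel. x \<in> {0<..<pi} \<longrightarrow> norm (x * Lf x ^ p) \<le> norm (pi * Lf x ^ p)"
  proof (intro AE_I2 impI)
    fix x :: real assume x: "x \<in> {0<..<pi}"
    have "\<bar>x\<bar> * \<bar>Lf x ^ p\<bar> \<le> pi * \<bar>Lf x ^ p\<bar>"
      using x by (intro mult_right_mono) auto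
    thus "norm (x * Lf x ^ p) \<le> norm (pi * Lf x ^ p)" by (simp add: abs_mult)
  qed
qed

lemma neg_half_pow: "(-1/2::real)^p = (-1)^p / 2^p"
  by (rule power_divide)

theorem mainTheorem7:
  fixes p n :: nat and z :: real
  assumes "(z = 2 * pi \<and> (n = 0 \<or> n = 1)) \<or> (z = pi \<and> n = 0)"
  shows "interval_lebesgue_integrable lborel 0 z (\<lambda>x. x ^ n * (ln (2 * sin (x / 2))) ^ p)
    \<and> Ls (p + n + 1) n z = - (LBINT x=0..z. x ^ n * (ln (2 * sin (x / 2))) ^ p)
    \<and> - (LBINT x=0..z. x ^ n * (ln (2 * sin (x / 2))) ^ p)
        = (-1) ^ (p + 1) * z ^ (n + 1) / (2 ^ p * real (n + 1))
          * complete_bell p (\<lambda>j. if j \<le> 1 then 0 else eta_bar j)"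
proof -
  define B where "B = complete_bell p (\<lambda>j. if j \<le> 1 then 0 else eta_bar j)"
  have Bs: "complete_bell p sbar = B" by (simp add: B_def sbar_def[abs_def])
  have ac: "acoef p = pi * ((-1)^p / 2^p) * B"
    using acoef_eq[of p] complete_bell_scale[of p] Bs neg_half_pow[of p] by (simp only: mult.assoc)
  define g where "g = (\<lambda>x::real. x ^ n * (ln (2 * sin (x / 2))) ^ p)"
  have gL: "g = (\<lambda>x. x^n * Lf x ^ p)" by (simp add: g_def Lf_def[abs_def])
  have z0: "z > 0" and z2: "z \<le> 2*pi" using assms by auto
  have iff_int: "interval_lebesgue_integrable lborel 0 (ereal z) g \<longleftrightarrow> set_integrable lborel {0<..<z} g"
    using z0 by (simp add: interval_lebesgue_integrable_def zero_ereal_def einterval_eq_Icc)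
  have int_eq: "(LBINT x=0..ereal z. g x) = (LBINT x:{0<..<z}. g x)"
    using z0 by (simp add: interval_integral_Ioo zero_ereal_def)
  have Ls_eq: "Ls (p + n + 1) n z = - (LBINT x:{0<..<z}. g x)"
  proof -
    have "Ls (p + n + 1) n z = - (LBINT x=0..ereal z. x ^ n * (ln \<bar>2 * sin (x / 2)\<bar>) ^ p)"
      by (simp add: Ls_def)
    also have "(LBINT x=0..ereal z. x ^ n * (ln \<bar>2 * sin (x / 2)\<bar>) ^ p)
             = (LBINT x:{0<..<z}. x ^ n * (ln \<bar>2 * sin (x / 2)\<bar>) ^ p)"
      using z0 by (simp add: interval_integral_Ioo zero_ereal_def)
    also have "\<dots> = (LBINT x:{0<..<z}. g x)"
    proof (rule set_lebesgue_integral_cong)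
      show "\<forall>x. x \<in> {0<..<z} \<longrightarrow> x ^ n * (ln \<bar>2 * sin (x / 2)\<bar>) ^ p = g x"
      proof (intro allI impI)
        fix x assume x: "x \<in> {0<..<z}"
        hence "sin (x/2) > 0" using z2 by (intro sin_gt_zero) auto
        thus "x ^ n * (ln \<bar>2 * sin (x / 2)\<bar>) ^ p = g x" by (simp add: g_def)
      qed
    qed simp
    finally show ?thesis .
  qed
  have main: "set_integrable lborel {0<..<z} g \<and>
      (LBINT x:{0<..<z}. g x) = (if n = 0 then z / pi else 2 * pi) * acoef p"
  proof (cases "z = pi")
    case True
    with assms have n: "n = 0" by auto
    have "set_integrable lborel {0<..<z} g" unfolding gL True n using Lpow_int[of p] by simp
    moreover have "(LBINT x:{0<..<z}. g x) = acoef p" unfolding gL True n by (simp add: acoef_def)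
    ultimately show ?thesis using True n by simp
  next
    case False
    with assms have z: "z = 2*pi" and n: "n = 0 \<or> n = 1" by auto
    have m: "g \<in> borel_measurable borel" unfolding g_def by measurable
    show ?thesis
    proof (cases "n = 0")
      case True
      have r: "(\<lambda>y. g (2*pi - y)) = (\<lambda>y. Lf y ^ p)" unfolding gL True by (simp add: Lf_reflect)
      have i1: "set_integrable lborel {0<..<pi} g" unfolding gL True using Lpow_int[of p] by simp
      have i2: "set_integrable lborel {pi<..<2*pi} g" unfolding reflect(1) r by (rule Lpow_int)
      have v2: "(LBINT x:{pi<..<2*pi}. g x) = acoef p" unfolding reflect(2) r acoef_def ..
      have v1: "(LBINT x:{0<..<pi}. g x) = acoef p" unfolding gL True by (simp add: acoef_def)
      show ?thesis using split2[OF m i1 i2] v1 v2 True z by simp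
    next
      case False
      with n have n1: "n = 1" by simp
      have r: "(\<lambda>y. g (2*pi - y)) = (\<lambda>y. 2*pi * Lf y ^ p - y * Lf y ^ p)"
        unfolding gL n1 by (simp only: Lf_reflect power_one_right) (simp add: algebra_simps)
      have i1: "set_integrable lborel {0<..<pi} g" unfolding gL n1 using xLpow_int[of p] by simp
      have i2: "set_integrable lborel {pi<..<2*pi} g" unfolding reflect(1) r
        by (intro set_integral_diff set_integrable_mult_right Lpow_int xLpow_int)
      have v2: "(LBINT x:{pi<..<2*pi}. g x) = 2*pi * acoef p - (LBINT x:{0<..<pi}. x * Lf x ^ p)"
        unfolding reflect(2) r
        by (subst set_integral_diff(2)) (auto intro: set_integrable_mult_right Lpow_int xLpow_int simp: acoef_def)
      have v1: "(LBINT x:{0<..<pi}. g x) = (LBINT x:{0<..<pi}. x * Lf x ^ p)" unfolding gL n1 by simp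
      show ?thesis using split2[OF m i1 i2] v1 v2 n1 z by simp
    qed
  qed
  have val: "- (LBINT x:{0<..<z}. g x) = (-1) ^ (p + 1) * z ^ (n + 1) / (2 ^ p * real (n + 1)) * B"
    using main assms unfolding ac by (auto simp: field_simps power2_eq_square)
  show ?thesis
    using iff_int int_eq Ls_eq main val unfolding g_def B_def by simp
qed

end
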